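(* Let $\mathbf v=(v_1,\dots,v_m)$ and $\mathbf k=(k_1,\dots,k_m)$ be $m$-tuples of positive integers with $k_i\le v_i$ for all $i$, and put $v=\sum_i v_i$, $k=\sum_i k_i$, assuming $k\ge 2$. Then \[ C(\mathbf v,\mathbf k,2)\ \ge\ \left\lceil \frac{\binom{v}{2}-\sum_{i:\,k_i=1}\binom{v_i}{2}}{\binom{k}{2}}\right\rceil=\left\lceil \frac{\sum_{i:\,k_i\neq 1}\binom{v_i}{2}+\sum_{1\le i<j\le m}v_iv_j}{\binom{k}{2}}\right\rceil, \] with the convention $\binom{1}{2}=0$.
   Context: Let $X_1,\dots,X_m$ be pairwise disjoint sets with $|X_i|=v_i$. A block is an $m$-tuple of sets $(B_1,\dots,B_m)$ with $B_i\subseteq X_i$, $|B_i|=k_i$. An $m$-tuple of sets $(T_1,\dots,T_m)$ is $(\mathbf v,\mathbf k,2)$-admissible if $T_i\subseteq X_i$, $|T_i|\le k_i$ for all $i$ and $\sum_i|T_i|=2$; it is contained in a block if $T_i\subseteq B_i$ for all $i$. A ${\rm GC}(\mathbf v,\mathbf k,2)$ is a finite family (repetitions allowed) of blocks such that every admissible tuple is contained in at least one block; $C(\mathbf v,\mathbf k,2)$ is the minimum number of blocks of such a family. *)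

theory Defs
  imports Complex_Main
begin

text \<open>Parts are indexed by i < m; ground sets X i; tuples of sets are functions nat => 'a set
  (only the components i < m are relevant).\<close>

definition is_block :: "nat \<Rightarrow> (nat \<Rightarrow> 'a set) \<Rightarrow> (nat \<Rightarrow> nat) \<Rightarrow> (nat \<Rightarrow> 'a set) \<Rightarrow> bool" where
  "is_block m X k B \<longleftrightarrow> (\<forall>i<m. B i \<subseteq> X i \<and> card (B i) = k i)"

definition admissible2 :: "nat \<Rightarrow> (nat \<Rightarrow> 'a set) \<Rightarrow> (nat \<Rightarrow> nat) \<Rightarrow> (nat \<Rightarrow> 'a set) \<Rightarrow> bool" where
  "admissible2 m X k T \<longleftrightarrow> (\<forall>i<m. T i \<subseteq> X i \<and> card (T i) \<le> k i) \<and> (\<Sum>i<m. card (T i)) = 2"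

definition contained_in :: "nat \<Rightarrow> (nat \<Rightarrow> 'a set) \<Rightarrow> (nat \<Rightarrow> 'a set) \<Rightarrow> bool" where
  "contained_in m T B \<longleftrightarrow> (\<forall>i<m. T i \<subseteq> B i)"

text \<open>A GC(v,k,2): a finite family of blocks (a list, so repetitions are allowed) covering
  every admissible tuple.\<close>
definition is_GC2 :: "nat \<Rightarrow> (nat \<Rightarrow> 'a set) \<Rightarrow> (nat \<Rightarrow> nat) \<Rightarrow> (nat \<Rightarrow> 'a set) list \<Rightarrow> bool" where
  "is_GC2 m X k F \<longleftrightarrow> (\<forall>B\<in>set F. is_block m X k B) \<and>
     (\<forall>T. admissible2 m X k T \<longrightarrow> (\<exists>B\<in>set F. contained_in m T B))"

definition C2 :: "nat \<Rightarrow> (nat \<Rightarrow> 'a set) \<Rightarrow> (nat \<Rightarrow> nat) \<Rightarrow> nat" where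
  "C2 m X k = (LEAST n. \<exists>F. is_GC2 m X k F \<and> length F = n)"

end

theory Submission
  imports Defs "HOL-Library.FuncSet"
begin

lemma choose2_add: "(a + b) choose 2 = (a choose 2) + (b choose 2) + a * (b::nat)"
proof (induction b)
  case 0 then show ?case by simp
next
  case (Suc b)
  have "(a + Suc b) choose 2 = ((a + b) choose 1) + ((a+b) choose 2)"
    by (metis Suc_1 add_Suc_right binomial_Suc_Suc)
  moreover have "Suc b choose 2 = (b choose 1) + (b choose 2)"
    by (metis Suc_1 binomial_Suc_Suc)
  ultimately show ?case using Suc by (simp add: algebra_simps)
qed

lemma choose2_sum: fixes m :: nat shows "(\<Sum>i<m. v i) choose 2 = (\<Sum>i<m. v i choose 2) + (\<Sum>i<m. \<Sum>j\<in>{i<..<m}. v i * (v j::nat))"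
proof (induction m)
  case 0 then show ?case by simp
next
  case (Suc m)
  have e: "\<And>i. i < m \<Longrightarrow> {i<..<Suc m} = insert m {i<..<m}" by auto
  have "(\<Sum>i<Suc m. \<Sum>j\<in>{i<..<Suc m}. v i * v j) = (\<Sum>i<m. \<Sum>j\<in>{i<..<Suc m}. v i * v j)"
    by simp
  also have "\<dots> = (\<Sum>i<m. v i * v m + (\<Sum>j\<in>{i<..<m}. v i * v j))"
    by (rule sum.cong) (simp_all add: e)
  also have "\<dots> = (\<Sum>i<m. v i) * v m + (\<Sum>i<m. \<Sum>j\<in>{i<..<m}. v i * v j)"
    by (simp add: sum.distrib sum_distrib_right)
  finally show ?case using Suc by (simp add: choose2_add)
qed

lemma extend_set:
  assumes "finite A" "B \<subseteq> A" "card B \<le> n" "n \<le> card A"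
  shows "\<exists>C. B \<subseteq> C \<and> C \<subseteq> A \<and> card C = n"
proof -
  have fb: "finite B" using assms finite_subset by blast
  have "n - card B \<le> card (A - B)" using assms fb by (simp add: card_Diff_subset)
  then obtain D where D: "D \<subseteq> A - B" "card D = n - card B"
    by (meson obtain_subset_with_card_n)
  have fd: "finite D" using D assms finite_subset by (meson finite_Diff)
  have "card (B \<union> D) = card B + card D" using D fb fd by (subst card_Un_disjoint) auto
  then show ?thesis using D assms by (intro exI[of _ "B \<union> D"]) auto
qed

lemma card_UN_list:
  assumes "\<forall>B\<in>set F. finite (A B) \<and> card (A B) \<le> K"
  shows "card (\<Union>B\<in>set F. A B) \<le> length F * K"
  using assms
proof (induction F)
  case Nil then show ?case by simp
next
  case (Cons a F)
  have "card (\<Union>B\<in>set (a # F). A B) \<le> card (A a) + card (\<Union>B\<in>set F. A B)"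
    by (simp add: card_Un_le)
  then show ?case using Cons by simp
qed

theorem proposition3p7:
  fixes m :: nat and X :: "nat \<Rightarrow> 'a set" and v k :: "nat \<Rightarrow> nat"
  assumes fin: "\<And>i. i < m \<Longrightarrow> finite (X i)"
    and cardX: "\<And>i. i < m \<Longrightarrow> card (X i) = v i"
    and disj: "\<And>i j. i < m \<Longrightarrow> j < m \<Longrightarrow> i \<noteq> j \<Longrightarrow> X i \<inter> X j = {}"
    and kpos: "\<And>i. i < m \<Longrightarrow> 0 < k i"
    and kle: "\<And>i. i < m \<Longrightarrow> k i \<le> v i"
    and k2: "(\<Sum>i<m. k i) \<ge> 2"
  shows "of_int \<lceil>(real ((\<Sum>i<m. v i) choose 2) - (\<Sum>i\<in>{i. i < m \<and> k i = 1}. real (v i choose 2)))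
                 / real ((\<Sum>i<m. k i) choose 2)\<rceil> \<le> real (C2 m X k)
       \<and> \<lceil>(real ((\<Sum>i<m. v i) choose 2) - (\<Sum>i\<in>{i. i < m \<and> k i = 1}. real (v i choose 2)))
                 / real ((\<Sum>i<m. k i) choose 2)\<rceil>
         = \<lceil>((\<Sum>i\<in>{i. i < m \<and> k i \<noteq> 1}. real (v i choose 2))
               + (\<Sum>i<m. \<Sum>j\<in>{i<..<m}. real (v i) * real (v j)))
                 / real ((\<Sum>i<m. k i) choose 2)\<rceil>"
proof
  define I1 where "I1 = {i. i < m \<and> k i = 1}"
  define K where "K = (\<Sum>i<m. k i) choose 2"
  have Kpos: "0 < K" unfolding K_def using k2 by simp
  define S where "S = {B \<in> PiE {..<m} (\<lambda>i. Pow (X i)). is_block m X k B}"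
  have "finite (PiE {..<m} (\<lambda>i. Pow (X i)))" by (rule finite_PiE) (auto simp: fin)
  then have "finite S" unfolding S_def by simp
  then obtain F0 where F0: "set F0 = S" using finite_list by blast
  have "is_GC2 m X k F0"
    unfolding is_GC2_def
  proof (intro conjI ballI allI impI)
    fix B assume "B \<in> set F0" then show "is_block m X k B" using F0 S_def by auto
  next
    fix T assume adm: "admissible2 m X k T"
    have "\<forall>i<m. \<exists>C. T i \<subseteq> C \<and> C \<subseteq> X i \<and> card C = k i"
    proof (intro allI impI)
      fix i assume i: "i < m"
      show "\<exists>C. T i \<subseteq> C \<and> C \<subseteq> X i \<and> card C = k i"
        using adm i fin[OF i] cardX[OF i] kle[OF i] unfolding admissible2_def
        by (intro extend_set) auto
    qed
    then obtain G where G: "\<And>i. i < m \<Longrightarrow> T i \<subseteq> G i \<and> G i \<subseteq> X i \<and> card (G i) = k i"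
      by metis
    define B where "B = (\<lambda>i. if i < m then G i else undefined)"
    have "B \<in> S" unfolding S_def is_block_def B_def using G by (auto simp: PiE_def extensional_def)
    moreover have "contained_in m T B" unfolding contained_in_def B_def using G by auto
    ultimately show "\<exists>B\<in>set F0. contained_in m T B" using F0 by auto
  qed
  then have "\<exists>n. \<exists>F. is_GC2 m X k F \<and> length F = n" by blast
  from LeastI_ex[OF this] have "\<exists>F. is_GC2 m X k F \<and> length F = C2 m X k"
    unfolding C2_def .
  then obtain F where GC: "is_GC2 m X k F" and lenF: "length F = C2 m X k" by blast
  define U where "U = (\<Union>i<m. X i)"
  have finU: "finite U" unfolding U_def using fin by auto
  have cardU: "card U = (\<Sum>i<m. v i)" unfolding U_def
    by (subst card_UN_disjoint) (auto simp: fin cardX disj)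
  define Q where "Q = {p. p \<subseteq> U \<and> card p = 2}"
  define Rf where "Rf = (\<lambda>i. {p. p \<subseteq> X i \<and> card p = 2})"
  define R where "R = (\<Union>i\<in>I1. Rf i)"
  have finI1: "finite I1" unfolding I1_def by auto
  have cardQ: "card Q = (\<Sum>i<m. v i) choose 2" unfolding Q_def using n_subsets[OF finU] cardU by simp
  have RQ: "R \<subseteq> Q" unfolding R_def Rf_def Q_def U_def I1_def by auto
  have finQ: "finite Q" unfolding Q_def using finU by auto
  have cardR: "card R = (\<Sum>i\<in>I1. v i choose 2)" unfolding R_def
  proof (subst card_UN_disjoint)
    show "finite I1" by fact
    show "\<forall>i\<in>I1. finite (Rf i)" unfolding Rf_def I1_def using fin by auto
    show "\<forall>i\<in>I1. \<forall>j\<in>I1. i \<noteq> j \<longrightarrow> Rf i \<inter> Rf j = {}"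
    proof (intro ballI impI)
      fix i j assume ij: "i \<in> I1" "j \<in> I1" "i \<noteq> j"
      show "Rf i \<inter> Rf j = {}"
      proof (rule ccontr)
        assume "Rf i \<inter> Rf j \<noteq> {}"
        then obtain p where "p \<subseteq> X i" "p \<subseteq> X j" "card p = 2" unfolding Rf_def by auto
        then have "p = {}" using disj[of i j] ij unfolding I1_def by auto
        then show False using \<open>card p = 2\<close> by simp
      qed
    qed
    show "(\<Sum>i\<in>I1. card (Rf i)) = (\<Sum>i\<in>I1. v i choose 2)"
      unfolding Rf_def I1_def by (rule sum.cong) (auto simp: n_subsets fin cardX)
  qed
  define P where "P = Q - R"
  have cardP: "card P = card Q - card R" unfolding P_def using RQ finQ
    by (meson card_Diff_subset finite_subset)
  have cRQ: "card R \<le> card Q" using RQ finQ card_mono by blast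
  define UB where "UB = (\<lambda>B::nat \<Rightarrow> 'a set. \<Union>i<m. B i)"
  define A where "A = (\<lambda>B::nat \<Rightarrow> 'a set. {p. p \<subseteq> UB B \<and> card p = 2})"
  have "P \<subseteq> (\<Union>B\<in>set F. A B)"
  proof
    fix p assume pP: "p \<in> P"
    then have pU: "p \<subseteq> U" and cp: "card p = 2" and pR: "p \<notin> R" unfolding P_def Q_def by auto
    have finp: "finite p" using cp card.infinite by fastforce
    define T where "T = (\<lambda>l. p \<inter> X l)"
    have pT: "p = (\<Union>l<m. T l)" unfolding T_def using pU U_def by auto
    have sumT: "(\<Sum>l<m. card (T l)) = 2"
    proof -
      have "card (\<Union>l<m. T l) = (\<Sum>l<m. card (T l))"
        by (rule card_UN_disjoint) (use finp disj in \<open>auto simp: T_def\<close>)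
      then show ?thesis using pT cp by simp
    qed
    have "admissible2 m X k T"
      unfolding admissible2_def
    proof (intro conjI allI impI sumT)
      fix l assume l: "l < m"
      show "T l \<subseteq> X l" unfolding T_def by auto
      have c2: "card (T l) \<le> 2" unfolding T_def using cp finp
        by (metis card_mono inf_le1)
      show "card (T l) \<le> k l"
      proof (cases "card (T l) = 2")
        case True
        then have "T l = p" unfolding T_def using cp finp
          by (metis card_subset_eq inf_le1)
        then have "p \<subseteq> X l" unfolding T_def by auto
        then have "k l \<noteq> 1" using pR cp l unfolding R_def Rf_def I1_def by auto
        then show ?thesis using kpos[OF l] True by simp
      next
        case False then show ?thesis using c2 kpos[OF l] by simp
      qed
    qed
    then obtain B where B: "B \<in> set F" "contained_in m T B" using GC unfolding is_GC2_def by blast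
    have "p \<subseteq> UB B" using B(2) pT unfolding contained_in_def UB_def by auto
    then show "p \<in> (\<Union>B\<in>set F. A B)" using B(1) cp unfolding A_def by auto
  qed
  moreover have "\<forall>B\<in>set F. finite (A B) \<and> card (A B) \<le> K"
  proof
    fix B assume "B \<in> set F"
    then have blk: "is_block m X k B" using GC unfolding is_GC2_def by auto
    have finB: "\<And>i. i < m \<Longrightarrow> finite (B i)" using blk kpos unfolding is_block_def
      by (metis card_ge_0_finite)
    have fUB: "finite (UB B)" unfolding UB_def using finB by auto
    have "card (UB B) = (\<Sum>i<m. k i)" unfolding UB_def
    proof (subst card_UN_disjoint)
      show "\<forall>i\<in>{..<m}. \<forall>j\<in>{..<m}. i \<noteq> j \<longrightarrow> B i \<inter> B j = {}"
        using blk disj unfolding is_block_def by blast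
    qed (use finB blk in \<open>auto simp: is_block_def\<close>)
    then have "card (A B) = K" unfolding A_def K_def using n_subsets[OF fUB, of 2] by simp
    then show "finite (A B) \<and> card (A B) \<le> K" unfolding A_def using fUB by auto
  qed
  ultimately have "card P \<le> length F * K"
  proof -
    assume sub: "P \<subseteq> (\<Union>B\<in>set F. A B)" and bd: "\<forall>B\<in>set F. finite (A B) \<and> card (A B) \<le> K"
    have "finite (\<Union>B\<in>set F. A B)" using bd by auto
    then have "card P \<le> card (\<Union>B\<in>set F. A B)" using sub by (rule card_mono)
    also have "\<dots> \<le> length F * K" using bd by (rule card_UN_list)
    finally show ?thesis .
  qed
  have realP: "real (card P) = real ((\<Sum>i<m. v i) choose 2) - (\<Sum>i\<in>I1. real (v i choose 2))"
    using cardP cRQ cardQ cardR by (simp add: of_nat_diff)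
  have "real (card P) / real K \<le> real (length F)"
    using \<open>card P \<le> length F * K\<close> Kpos
  proof -
    have "real (card P) \<le> real (length F) * real K"
      using \<open>card P \<le> length F * K\<close> by (metis of_nat_le_iff of_nat_mult)
    then show ?thesis using Kpos by (simp add: divide_le_eq)
  qed
  then have "\<lceil>real (card P) / real K\<rceil> \<le> int (length F)"
    by (simp add: ceiling_le_iff)
  then show "of_int \<lceil>(real ((\<Sum>i<m. v i) choose 2) - (\<Sum>i\<in>{i. i < m \<and> k i = 1}. real (v i choose 2)))
                 / real ((\<Sum>i<m. k i) choose 2)\<rceil> \<le> real (C2 m X k)"
    using realP lenF unfolding I1_def K_def by simp
next
  define I1 where "I1 = {i. i < m \<and> k i = 1}"
  define I2 where "I2 = {i. i < m \<and> k i \<noteq> 1}"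
  have "{..<m} = I1 \<union> I2" "I1 \<inter> I2 = {}" unfolding I1_def I2_def by auto
  then have sp: "(\<Sum>i<m. real (v i choose 2)) = (\<Sum>i\<in>I1. real (v i choose 2)) + (\<Sum>i\<in>I2. real (v i choose 2))"
    by (metis finite_Un finite_lessThan sum.union_disjoint)
  have "real ((\<Sum>i<m. v i) choose 2) = (\<Sum>i<m. real (v i choose 2)) + (\<Sum>i<m. \<Sum>j\<in>{i<..<m}. real (v i) * real (v j))"
    by (subst choose2_sum) simp
  then show "\<lceil>(real ((\<Sum>i<m. v i) choose 2) - (\<Sum>i\<in>{i. i < m \<and> k i = 1}. real (v i choose 2)))
                 / real ((\<Sum>i<m. k i) choose 2)\<rceil>
         = \<lceil>((\<Sum>i\<in>{i. i < m \<and> k i \<noteq> 1}. real (v i choose 2))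
               + (\<Sum>i<m. \<Sum>j\<in>{i<..<m}. real (v i) * real (v j)))
                 / real ((\<Sum>i<m. k i) choose 2)\<rceil>"
    using sp unfolding I1_def I2_def by simp
qed

end
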